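(* Fix a constant $c\ge 10$. Consider the random pairwise load balancing process on $n\ge2$ nodes with arbitrary initial load vector, and let $T_2$ be the first time $t\ge T_1$ with $\max_i\ell_i(t)\le\varnothing+2c$ and $\min_i\ell_i(t)\ge\varnothing-2c$. Let $T_3$ be the first time $t\ge T_2$ such that $\max_{1\le i\le n}\ell_i(t)\le \mathrm{round}(\varnothing)+1$ and $\min_{1\le i\le n}\ell_i(t)\ge\mathrm{round}(\varnothing)-1$. Then with high probability (probability $1-O(1/n)$), $T_3=T_2+O(n\log n)$, where the constant in $O(\cdot)$ depends only on $c$.
   Context: Random pairwise load balancing process: $n$ nodes, $m$ tokens, load vector $\ell(t)\in\mathbb{Z}^n$. In each time step $t$, independently, an ordered pair $(u,v)$ of distinct nodes is chosen uniformly at random and loads become $\ell_u(t+1)=\lceil(\ell_u(t)+\ell_v(t))/2\rceil$, $\ell_v(t+1)=\lfloor(\ell_u(t)+\ell_v(t))/2\rfloor$. Average load $\varnothing=m/n$; $\mathrm{round}(\varnothing)$ is $\varnothing$ rounded to the nearest integer; potential $\Phi(\ell)=\sum_i(\ell_i-\varnothing)^2$; $T_1$ is the first time $t$ with $\Phi(\ell(t))<n$. *)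

theory Defs
  imports "HOL-Probability.Probability"
begin

text \<open>Nodes are 0..n-1; a load vector is a function nat => int (only indices < n matter).\<close>

definition node_pairs :: "nat \<Rightarrow> (nat \<times> nat) set" where
  "node_pairs n = {(u, v). u < n \<and> v < n \<and> u \<noteq> v}"

text \<open>Probability space: an infinite i.i.d. sequence of uniformly random ordered pairs
of distinct nodes; the t-th element is the pair chosen in step t.\<close>
definition pair_space :: "nat \<Rightarrow> (nat \<times> nat) stream measure" where
  "pair_space n = stream_space (measure_pmf (pmf_of_set (node_pairs n)))"

definition lb_step :: "(nat \<Rightarrow> int) \<Rightarrow> nat \<times> nat \<Rightarrow> (nat \<Rightarrow> int)" where
  "lb_step l p = (case p of (u, v) \<Rightarrow>
     l(u := \<lceil>real_of_int (l u + l v) / 2\<rceil>, v := \<lfloor>real_of_int (l u + l v) / 2\<rfloor>))"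

primrec load :: "(nat \<Rightarrow> int) \<Rightarrow> (nat \<times> nat) stream \<Rightarrow> nat \<Rightarrow> (nat \<Rightarrow> int)" where
  "load l0 \<omega> 0 = l0"
| "load l0 \<omega> (Suc t) = lb_step (load l0 \<omega> t) (\<omega> !! t)"

definition avg :: "nat \<Rightarrow> (nat \<Rightarrow> int) \<Rightarrow> real" where
  "avg n l = real_of_int (\<Sum>i<n. l i) / real n"

definition Phi :: "nat \<Rightarrow> real \<Rightarrow> (nat \<Rightarrow> int) \<Rightarrow> real" where
  "Phi n a l = (\<Sum>i<n. (real_of_int (l i) - a)^2)"

definition maxload :: "nat \<Rightarrow> (nat \<Rightarrow> int) \<Rightarrow> int" where
  "maxload n l = Max (l ` {..<n})"

definition minload :: "nat \<Rightarrow> (nat \<Rightarrow> int) \<Rightarrow> int" where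
  "minload n l = Min (l ` {..<n})"

definition hit_from :: "enat \<Rightarrow> (nat \<Rightarrow> bool) \<Rightarrow> enat" where
  "hit_from s P = (case s of
      enat s0 \<Rightarrow> (if \<exists>t\<ge>s0. P t then enat (LEAST t. s0 \<le> t \<and> P t) else \<infinity>)
    | \<infinity> \<Rightarrow> \<infinity>)"

definition T1 :: "nat \<Rightarrow> (nat \<Rightarrow> int) \<Rightarrow> (nat \<times> nat) stream \<Rightarrow> enat" where
  "T1 n l0 \<omega> = hit_from 0 (\<lambda>t. Phi n (avg n l0) (load l0 \<omega> t) < real n)"

definition T2 :: "real \<Rightarrow> nat \<Rightarrow> (nat \<Rightarrow> int) \<Rightarrow> (nat \<times> nat) stream \<Rightarrow> enat" where
  "T2 c n l0 \<omega> = hit_from (T1 n l0 \<omega>)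
     (\<lambda>t. real_of_int (maxload n (load l0 \<omega> t)) \<le> avg n l0 + 2 * c \<and>
          real_of_int (minload n (load l0 \<omega> t)) \<ge> avg n l0 - 2 * c)"

text \<open>round(x) = floor(x + 1/2), i.e. ties rounded up.\<close>
definition T3 :: "real \<Rightarrow> nat \<Rightarrow> (nat \<Rightarrow> int) \<Rightarrow> (nat \<times> nat) stream \<Rightarrow> enat" where
  "T3 c n l0 \<omega> = hit_from (T2 c n l0 \<omega>)
     (\<lambda>t. maxload n (load l0 \<omega> t) \<le> round (avg n l0) + 1 \<and>
          minload n (load l0 \<omega> t) \<ge> round (avg n l0) - 1)"

end

theory Submission
  imports Defs
begin


lemma ceil_half: "\<lceil>real_of_int s / 2\<rceil> = (s + 1) div 2"
proof -
  have "\<lceil>real_of_int s / 2\<rceil> = - \<lfloor>real_of_int (- s) / 2\<rfloor>"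
    by (simp add: ceiling_def)
  also have "\<lfloor>real_of_int (- s) / 2\<rfloor> = (-s) div 2"
    by (metis floor_divide_of_int_eq of_int_numeral)
  finally show ?thesis by presburger
qed

lemma floor_half: "\<lfloor>real_of_int s / 2\<rfloor> = s div 2"
  by (metis floor_divide_of_int_eq of_int_numeral)

lemma lb_step_eq: "lb_step l (u, v) = l(u := (l u + l v + 1) div 2, v := (l u + l v) div 2)"
  unfolding lb_step_def using ceil_half[of "l u + l v"] floor_half[of "l u + l v"] by simp

lemma sum_upd2:
  fixes f :: "int \<Rightarrow> 'b::ab_group_add" and u v n :: nat
  assumes "u < n" "v < n" "u \<noteq> v"
  shows "(\<Sum>i<n. f ((l(u:=A, v:=B)) i)) = (\<Sum>i<n. f (l i)) - f (l u) - f (l v) + f A + f B"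
proof -
  have e1: "(\<Sum>i<n. g i) = g u + g v + (\<Sum>i\<in>{..<n} - {u} - {v}. g i)" for g :: "nat \<Rightarrow> 'b"
  proof -
    have "sum g {..<n} = g u + sum g ({..<n}-{u})" by (rule sum.remove) (use assms in auto)
    moreover have "sum g ({..<n}-{u}) = g v + sum g ({..<n}-{u}-{v})" by (rule sum.remove) (use assms in auto)
    ultimately show ?thesis by (simp add: algebra_simps)
  qed
  have e2: "(\<Sum>i\<in>{..<n} - {u} - {v}. f ((l(u:=A, v:=B)) i)) = (\<Sum>i\<in>{..<n} - {u} - {v}. f (l i))"
    by (rule sum.cong) auto
  show ?thesis
    apply (subst (1 2) e1)
    using assms e2 by (simp add: algebra_simps)
qed

lemma pair_sum: "(x + y + 1) div 2 + (x + y) div 2 = (x::int) + y" by presburger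

lemma pair_between:
  fixes x y :: int
  shows "min x y \<le> (x + y + 1) div 2" "(x + y + 1) div 2 \<le> max x y"
         "min x y \<le> (x + y) div 2" "(x + y) div 2 \<le> max x y"
  by presburger+

lemma pair_diff: "(x + y + 1) div 2 \<le> (x + y) div 2 + 1" "(x + y) div 2 \<le> (x + y + 1) div 2" for x y :: int
  by presburger+

definition e :: "int \<Rightarrow> int \<Rightarrow> int" where
  "e r z = max 0 (z - (r+1)) + max 0 ((r - 1) - z)"

lemma e_aux:
  assumes "A + B = x + y" "min x y \<le> A" "A \<le> max x y" "min x y \<le> B" "B \<le> max x y"
    "A \<le> B + 1" "B \<le> A + 1"
  shows "e r A + e r B \<le> e r x + e r y"
    and "x \<ge> r + 2 \<Longrightarrow> y \<le> r \<Longrightarrow> e r A + e r B \<le> e r x + e r y - 1"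
    and "x \<le> r - 2 \<Longrightarrow> y \<ge> r \<Longrightarrow> e r A + e r B \<le> e r x + e r y - 1"
  using assms unfolding e_def by (simp_all add: max_def min_def split: if_splits; linarith)+

lemma e_pair:
  fixes x y r :: int
  shows "e r ((x + y + 1) div 2) + e r ((x + y) div 2) \<le> e r x + e r y"
    and "x \<ge> r + 2 \<Longrightarrow> y \<le> r \<Longrightarrow> e r ((x + y + 1) div 2) + e r ((x + y) div 2) \<le> e r x + e r y - 1"
    and "x \<le> r - 2 \<Longrightarrow> y \<ge> r \<Longrightarrow> e r ((x + y + 1) div 2) + e r ((x + y) div 2) \<le> e r x + e r y - 1"
proof -
  note pb = pair_between[of x y] and pd = pair_diff[of x y]
  show "e r ((x + y + 1) div 2) + e r ((x + y) div 2) \<le> e r x + e r y"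
    by (rule e_aux(1)[OF pair_sum]) (use pb pd in linarith)+
  show "x \<ge> r + 2 \<Longrightarrow> y \<le> r \<Longrightarrow> e r ((x + y + 1) div 2) + e r ((x + y) div 2) \<le> e r x + e r y - 1"
    by (rule e_aux(2)[OF pair_sum]) (use pb pd in linarith)+
  show "x \<le> r - 2 \<Longrightarrow> y \<ge> r \<Longrightarrow> e r ((x + y + 1) div 2) + e r ((x + y) div 2) \<le> e r x + e r y - 1"
    by (rule e_aux(3)[OF pair_sum]) (use pb pd in linarith)+
qed

lemma sq_aux:
  fixes A B x y :: int
  assumes "A + B = x + y" "A \<le> B + 1" "B \<le> A"
  shows "A^2 + B^2 \<le> x^2 + y^2" and "\<bar>x - y\<bar> \<ge> 2 \<Longrightarrow> A^2 + B^2 \<le> x^2 + y^2 - 1"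
proof -
  have i1: "2*(A^2 + B^2) = (A+B)^2 + (A-B)^2" by (simp add: power2_eq_square algebra_simps)
  have i2: "2*(x^2 + y^2) = (x+y)^2 + (x-y)^2" by (simp add: power2_eq_square algebra_simps)
  have h: "(A - B) = 0 \<or> A - B = 1" using assms by auto
  have ab: "(A-B)^2 \<le> 1" using h by auto
  show "A^2 + B^2 \<le> x^2 + y^2"
  proof (cases "A = B")
    case True
    have "(A+B)^2 = (x+y)^2" using assms(1) by simp
    moreover have "(A-B)^2 = 0" using True by simp
    moreover have "(x-y)^2 \<ge> 0" by simp
    ultimately have "2 * (A^2 + B^2) \<le> 2 * (x^2 + y^2)" unfolding i1 i2 by simp
    then show ?thesis by simp
  next
    case False
    then have "A - B = 1" using assms by auto
    then have "odd (x - y)" using assms(1) by (metis add_diff_cancel_left' diff_add_cancel dvd_add_triv_right_iff even_add odd_one)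
    then have "x - y \<noteq> 0" by auto
    then have "(x-y)^2 \<ge> 1" by (simp add: power2_eq_square) (smt (verit) mult_le_0_iff mult_less_cancel_left2)
    moreover have "(A+B)^2 = (x+y)^2" using assms(1) by simp
    moreover have "(A-B)^2 = 1" using \<open>A - B = 1\<close> by simp
    ultimately have "2 * (A^2 + B^2) \<le> 2 * (x^2 + y^2)" unfolding i1 i2 by simp
    then show ?thesis by simp
  qed
  show "A^2 + B^2 \<le> x^2 + y^2 - 1" if "\<bar>x - y\<bar> \<ge> 2"
  proof -
    have "\<bar>x-y\<bar> * \<bar>x-y\<bar> \<ge> 2*2" using that by (intro mult_mono) auto
    then have "(x-y)^2 \<ge> 4" by (simp add: power2_eq_square abs_mult_self_eq)
    moreover have "(A+B)^2 = (x+y)^2" using assms(1) by simp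
    ultimately have "2 * (A^2 + B^2) \<le> 2 * (x^2 + y^2) - 2" using ab unfolding i1 i2 by simp
    then show ?thesis by simp
  qed
qed

lemma sq_pair:
  fixes x y :: int
  shows "((x + y + 1) div 2)^2 + ((x + y) div 2)^2 \<le> x^2 + y^2"
    and "\<bar>x - y\<bar> \<ge> 2 \<Longrightarrow> ((x + y + 1) div 2)^2 + ((x + y) div 2)^2 \<le> x^2 + y^2 - 1"
proof -
  note pd = pair_diff[of x y]
  show "((x + y + 1) div 2)^2 + ((x + y) div 2)^2 \<le> x^2 + y^2"
    by (rule sq_aux(1)[OF pair_sum]) (use pd in linarith)+
  show "\<bar>x - y\<bar> \<ge> 2 \<Longrightarrow> ((x + y + 1) div 2)^2 + ((x + y) div 2)^2 \<le> x^2 + y^2 - 1"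
    by (rule sq_aux(2)[OF pair_sum]) (use pd in linarith)+
qed



lemma load_Suc': "load l \<omega> (Suc t) = load (lb_step l (shd \<omega>)) (stl \<omega>) t"
  by (induction t arbitrary: l \<omega>) (auto simp: snth.simps)

abbreviation PM :: "nat \<Rightarrow> (nat \<times> nat) measure" where
  "PM n \<equiv> measure_pmf (pmf_of_set (node_pairs n))"

lemma np_fin: "finite (node_pairs n)"
proof -
  have "node_pairs n \<subseteq> {..<n} \<times> {..<n}" by (auto simp: node_pairs_def)
  then show ?thesis by (rule finite_subset) auto
qed

lemma np_card: "card (node_pairs n) \<le> n * n"
proof -
  have "node_pairs n \<subseteq> {..<n} \<times> {..<n}" by (auto simp: node_pairs_def)
  then have "card (node_pairs n) \<le> card ({..<n} \<times> {..<n})" by (rule card_mono[rotated]) auto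
  then show ?thesis by (simp add: card_cartesian_product)
qed

lemma np_ne: "n \<ge> 2 \<Longrightarrow> node_pairs n \<noteq> {}"
proof -
  assume "n \<ge> 2"
  then have "(0,1) \<in> node_pairs n" by (simp add: node_pairs_def)
  then show ?thesis by blast
qed

lemma np_card_pos: "n \<ge> 2 \<Longrightarrow> card (node_pairs n) > 0"
  using np_ne np_fin by (simp add: card_gt_0_iff)

lemma ps_prob: "prob_space (pair_space n)"
  unfolding pair_space_def
  by (rule prob_space.prob_space_stream_space) (rule prob_space_measure_pmf)

lemma space_ps: "space (pair_space n) = UNIV"
  unfolding pair_space_def by (simp add: space_stream_space)

lemma meas_shd: "shd \<in> measurable (pair_space n) (count_space UNIV)"
  unfolding pair_space_def
  using measurable_shd[of "PM n"] by (simp add: measurable_cong_sets[OF refl sets_measure_pmf_count_space])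

lemma meas_stl: "stl \<in> measurable (pair_space n) (pair_space n)"
  unfolding pair_space_def by (rule measurable_stl)

lemma meas_load: "(\<lambda>\<omega>. load l \<omega> t) \<in> measurable (pair_space n) (count_space UNIV)"
proof (induction t arbitrary: l)
  case 0
  then show ?case by simp
next
  case (Suc t)
  have "(\<lambda>\<omega>. (\<lambda>p \<omega>. load (lb_step l p) (stl \<omega>) t) (shd \<omega>) \<omega>) \<in> measurable (pair_space n) (count_space UNIV)"
    by (rule measurable_compose_countable[OF _ meas_shd])
       (rule measurable_compose[OF meas_stl Suc.IH])
  then show ?case by (simp only: load_Suc')
qed

lemma pred_load: "Measurable.pred (pair_space n) (\<lambda>\<omega>. R (load l \<omega> t))"
  by (rule measurable_compose[OF meas_load]) simp

lemma first_step:
  assumes n2: "n \<ge> 2" and A: "\<And>l. Measurable.pred (pair_space n) (A l)"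
  shows "measure (pair_space n) {\<omega> \<in> space (pair_space n). A (lb_step l (shd \<omega>)) (stl \<omega>)} =
    (\<Sum>p\<in>node_pairs n. measure (pair_space n) {\<omega> \<in> space (pair_space n). A (lb_step l p) \<omega>}) / card (node_pairs n)"
proof -
  interpret P: prob_space "pair_space n" by (rule ps_prob)
  have predA: "Measurable.pred (pair_space n) (\<lambda>\<omega>. (\<lambda>p \<omega>. A (lb_step l p) (stl \<omega>)) (shd \<omega>) \<omega>)"
    by (rule measurable_compose_countable[OF _ meas_shd]) (rule measurable_compose[OF meas_stl A])
  have "ennreal (measure (pair_space n) {\<omega> \<in> space (pair_space n). A (lb_step l (shd \<omega>)) (stl \<omega>)})
     = (\<integral>\<^sup>+t. ennreal (measure (pair_space n) {\<omega> \<in> space (pair_space n). A (lb_step l (shd (t ## \<omega>))) (stl (t ## \<omega>))}) \<partial>PM n)"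
    unfolding pair_space_def
    by (rule prob_space.prob_stream_space[OF prob_space_measure_pmf]) (use predA in \<open>simp add: pair_space_def\<close>)
  also have "\<dots> = (\<integral>\<^sup>+t. ennreal (measure (pair_space n) {\<omega> \<in> space (pair_space n). A (lb_step l t) \<omega>}) \<partial>PM n)"
    by simp
  also have "\<dots> = (\<Sum>t\<in>node_pairs n. ennreal (measure (pair_space n) {\<omega> \<in> space (pair_space n). A (lb_step l t) \<omega>})) / card (node_pairs n)"
    by (rule nn_integral_pmf_of_set[OF np_ne[OF n2] np_fin])
  also have "\<dots> = ennreal ((\<Sum>p\<in>node_pairs n. measure (pair_space n) {\<omega> \<in> space (pair_space n). A (lb_step l p) \<omega>}) / card (node_pairs n))"
    using np_card_pos[OF n2]
    by (simp add: ennreal_of_nat_eq_real_of_nat divide_ennreal sum_nonneg)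
  finally show ?thesis
    by (subst (asm) ennreal_inj) (auto intro!: divide_nonneg_nonneg sum_nonneg)
qed

lemma Pr_Suc:
  assumes "n \<ge> 2"
  shows "measure (pair_space n) {\<omega> \<in> space (pair_space n). R (load l \<omega> (Suc t))} =
    (\<Sum>p\<in>node_pairs n. measure (pair_space n) {\<omega> \<in> space (pair_space n). R (load (lb_step l p) \<omega> t)}) / card (node_pairs n)"
  unfolding load_Suc' by (rule first_step[OF assms pred_load])



definition Exs :: "nat \<Rightarrow> int \<Rightarrow> (nat \<Rightarrow> int) \<Rightarrow> int" where
  "Exs n r l = (\<Sum>i<n. e r (l i))"

definition Qs :: "nat \<Rightarrow> (nat \<Rightarrow> int) \<Rightarrow> int" where
  "Qs n l = (\<Sum>i<n. (l i)^2)"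

definition Wc :: "real \<Rightarrow> nat \<Rightarrow> real \<Rightarrow> (nat \<Rightarrow> int) \<Rightarrow> bool" where
  "Wc c n a l \<longleftrightarrow> (\<forall>i<n. a - 2*c \<le> real_of_int (l i) \<and> real_of_int (l i) \<le> a + 2*c)"

definition Gc :: "real \<Rightarrow> nat \<Rightarrow> real \<Rightarrow> (nat \<Rightarrow> int) \<Rightarrow> bool" where
  "Gc c n a l \<longleftrightarrow> Phi n a l < real n \<and> Wc c n a l"

definition Tg :: "nat \<Rightarrow> int \<Rightarrow> (nat \<Rightarrow> int) \<Rightarrow> bool" where
  "Tg n r l \<longleftrightarrow> (\<forall>i<n. r - 1 \<le> l i \<and> l i \<le> r + 1)"

lemma np_D: "(u, v) \<in> node_pairs n \<Longrightarrow> u < n \<and> v < n \<and> u \<noteq> v"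
  by (simp add: node_pairs_def)

lemma step_sum:
  assumes "(u, v) \<in> node_pairs n"
  shows "(\<Sum>i<n. lb_step l (u, v) i) = (\<Sum>i<n. l i)"
  using sum_upd2[of u n v "\<lambda>z. z" l] np_D[OF assms] pair_sum[of "l u" "l v"]
  by (simp add: lb_step_eq)

lemma step_interval:
  assumes "(u, v) \<in> node_pairs n" "\<forall>i<n. lo \<le> real_of_int (l i) \<and> real_of_int (l i) \<le> hi"
  shows "\<forall>i<n. lo \<le> real_of_int (lb_step l (u, v) i) \<and> real_of_int (lb_step l (u, v) i) \<le> hi"
proof (intro allI impI)
  fix i assume i: "i < n"
  have uv: "u < n" "v < n" "u \<noteq> v" using np_D[OF assms(1)] by auto
  note pb = pair_between[of "l u" "l v"]
  have bu: "lo \<le> real_of_int (l u)" "real_of_int (l u) \<le> hi" using assms(2) uv by auto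
  have bv: "lo \<le> real_of_int (l v)" "real_of_int (l v) \<le> hi" using assms(2) uv by auto
  have mm: "lo \<le> real_of_int (min (l u) (l v))" "real_of_int (max (l u) (l v)) \<le> hi"
    using bu bv by (auto simp: min_def max_def)
  have g: "lo \<le> real_of_int z \<and> real_of_int z \<le> hi" if "min (l u) (l v) \<le> z" "z \<le> max (l u) (l v)" for z
  proof -
    have "real_of_int (min (l u) (l v)) \<le> real_of_int z" "real_of_int z \<le> real_of_int (max (l u) (l v))"
      using that by simp_all
    then show ?thesis using mm by linarith
  qed
  show "lo \<le> real_of_int (lb_step l (u, v) i) \<and> real_of_int (lb_step l (u, v) i) \<le> hi"
    using g[OF pb(1,2)] g[OF pb(3,4)] assms(2) i by (auto simp: lb_step_eq)
qed

lemma step_Ex: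
  assumes "(u, v) \<in> node_pairs n"
  shows "Exs n r (lb_step l (u, v)) \<le> Exs n r l"
    and "(l u \<ge> r + 2 \<and> l v \<le> r) \<or> (l u \<le> r - 2 \<and> l v \<ge> r) \<Longrightarrow> Exs n r (lb_step l (u, v)) \<le> Exs n r l - 1"
proof -
  have uv: "u < n" "v < n" "u \<noteq> v" using np_D[OF assms(1)] by auto
  have eq: "Exs n r (lb_step l (u, v)) = Exs n r l - e r (l u) - e r (l v) + e r ((l u + l v + 1) div 2) + e r ((l u + l v) div 2)"
    unfolding Exs_def lb_step_eq by (rule sum_upd2[OF uv])
  show "Exs n r (lb_step l (u, v)) \<le> Exs n r l" using eq e_pair(1)[of r "l u" "l v"] by linarith
  show "Exs n r (lb_step l (u, v)) \<le> Exs n r l - 1" if "(l u \<ge> r + 2 \<and> l v \<le> r) \<or> (l u \<le> r - 2 \<and> l v \<ge> r)"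
    using that eq e_pair(2)[of r "l u" "l v"] e_pair(3)[of "l u" r "l v"] by linarith
qed

lemma step_Q:
  assumes "(u, v) \<in> node_pairs n"
  shows "Qs n (lb_step l (u, v)) \<le> Qs n l"
    and "\<bar>l u - l v\<bar> \<ge> 2 \<Longrightarrow> Qs n (lb_step l (u, v)) \<le> Qs n l - 1"
proof -
  have uv: "u < n" "v < n" "u \<noteq> v" using np_D[OF assms(1)] by auto
  have eq: "Qs n (lb_step l (u, v)) = Qs n l - (l u)^2 - (l v)^2 + ((l u + l v + 1) div 2)^2 + ((l u + l v) div 2)^2"
    unfolding Qs_def lb_step_eq by (rule sum_upd2[OF uv, where f = "\<lambda>z. z^2"])
  show "Qs n (lb_step l (u, v)) \<le> Qs n l" using eq sq_pair(1)[of "l u" "l v"] by linarith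
  show "Qs n (lb_step l (u, v)) \<le> Qs n l - 1" if "\<bar>l u - l v\<bar> \<ge> 2"
    using that eq sq_pair(2)[of "l u" "l v"] by linarith
qed

lemma step_Phi:
  assumes "(u, v) \<in> node_pairs n"
  shows "Phi n a (lb_step l (u, v)) \<le> Phi n a l"
proof -
  have uv: "u < n" "v < n" "u \<noteq> v" using np_D[OF assms(1)] by auto
  define A where "A = (l u + l v + 1) div 2"
  define B where "B = (l u + l v) div 2"
  have eq: "Phi n a (lb_step l (u, v)) = Phi n a l - (real_of_int (l u) - a)^2 - (real_of_int (l v) - a)^2
      + (real_of_int A - a)^2 + (real_of_int B - a)^2"
    unfolding Phi_def lb_step_eq A_def B_def by (rule sum_upd2[OF uv, where f = "\<lambda>z. (real_of_int z - a)^2"])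
  have s: "A + B = l u + l v" using pair_sum unfolding A_def B_def by blast
  have q: "A^2 + B^2 \<le> (l u)^2 + (l v)^2" using sq_pair(1) unfolding A_def B_def by blast
  have s': "real_of_int A + real_of_int B = real_of_int (l u) + real_of_int (l v)"
    using s by (metis of_int_add)
  have q': "(real_of_int A)^2 + (real_of_int B)^2 \<le> (real_of_int (l u))^2 + (real_of_int (l v))^2"
    using q by (metis of_int_add of_int_le_iff of_int_power)
  have "(real_of_int A - a)^2 + (real_of_int B - a)^2 =
      (real_of_int A)^2 + (real_of_int B)^2 - 2*a*(real_of_int A + real_of_int B) + 2*a^2"
    by (simp add: power2_eq_square algebra_simps)
  moreover have "(real_of_int (l u) - a)^2 + (real_of_int (l v) - a)^2 =
      (real_of_int (l u))^2 + (real_of_int (l v))^2 - 2*a*(real_of_int (l u) + real_of_int (l v)) + 2*a^2"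
    by (simp add: power2_eq_square algebra_simps)
  moreover have "2*a*(real_of_int A + real_of_int B) = 2*a*(real_of_int (l u) + real_of_int (l v))"
    using s' by simp
  ultimately show ?thesis using eq q' by linarith
qed

lemma Wc_step: "(u, v) \<in> node_pairs n \<Longrightarrow> Wc c n a l \<Longrightarrow> Wc c n a (lb_step l (u, v))"
  unfolding Wc_def by (rule step_interval)

lemma Tg_step: "(u, v) \<in> node_pairs n \<Longrightarrow> Tg n r l \<Longrightarrow> Tg n r (lb_step l (u, v))"
proof -
  assume a: "(u, v) \<in> node_pairs n" "Tg n r l"
  have "\<forall>i<n. real_of_int (r - 1) \<le> real_of_int (l i) \<and> real_of_int (l i) \<le> real_of_int (r + 1)"
    using a(2) unfolding Tg_def by (simp only: of_int_le_iff)
  from step_interval[OF a(1) this] show ?thesis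
    unfolding Tg_def by (simp only: of_int_le_iff)
qed

lemma Gc_step: "(u, v) \<in> node_pairs n \<Longrightarrow> Gc c n a l \<Longrightarrow> Gc c n a (lb_step l (u, v))"
  unfolding Gc_def using Wc_step step_Phi by (meson le_less_trans)

lemma e_nonneg: "e r z \<ge> 0" unfolding e_def by simp

lemma Exs_nonneg: "Exs n r l \<ge> 0" unfolding Exs_def by (rule sum_nonneg) (simp add: e_nonneg)

lemma Tg_iff: "Tg n r l \<longleftrightarrow> Exs n r l = 0"
proof -
  have "Exs n r l = 0 \<longleftrightarrow> (\<forall>i<n. e r (l i) = 0)"
    unfolding Exs_def by (subst sum_nonneg_eq_0_iff) (auto simp: e_nonneg)
  moreover have "e r z = 0 \<longleftrightarrow> r - 1 \<le> z \<and> z \<le> r + 1" for z unfolding e_def by auto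
  ultimately show ?thesis unfolding Tg_def by auto
qed

lemma Qs_nonneg: "Qs n l \<ge> 0" unfolding Qs_def by (rule sum_nonneg) simp



lemma e_cases: "e r z = (if z > r + 1 then z - r - 1 else if z < r - 1 then r - 1 - z else 0)"
  unfolding e_def by auto

lemma e_bound:
  assumes "a - 2*c \<le> real_of_int z" "real_of_int z \<le> a + 2*c"
    "a - 1/2 \<le> real_of_int r" "real_of_int r \<le> a + 1/2"
  shows "real_of_int (e r z) \<le> 2*c" and "e r z \<noteq> 0 \<Longrightarrow> z \<ge> r + 2 \<or> z \<le> r - 2"
  using assms by (auto simp: e_cases split: if_splits)

lemma count_low:
  fixes l :: "nat \<Rightarrow> int" and n :: nat and c a :: real and r :: int
  assumes c: "c > 0"
    and sumI: "real_of_int (\<Sum>i<n. l i) = a * real n"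
    and W: "Wc c n a l" and r1: "a - 1/2 \<le> real_of_int r" and r2: "real_of_int r \<le> a + 1/2"
  shows "real (card {i. i < n \<and> l i \<le> r}) * (4*c+4) \<ge> real n"
    and "real (card {i. i < n \<and> l i \<ge> r}) * (4*c+4) \<ge> real n"
proof -
  define L where "L = {i. i < n \<and> l i \<le> r}"
  have Lsub: "L \<subseteq> {..<n}" unfolding L_def by auto
  have finL: "finite L" using Lsub finite_subset by blast
  have cL: "card ({..<n} - L) = n - card L" using Lsub finL by (simp add: card_Diff_subset)
  have cLn: "card L \<le> n" using card_mono[OF finite_lessThan Lsub] by simp
  have s: "(\<Sum>i<n. real_of_int (l i)) = (\<Sum>i\<in>L. real_of_int (l i)) + (\<Sum>i\<in>{..<n} - L. real_of_int (l i))"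
    using sum.subset_diff[OF Lsub finite_lessThan, of "\<lambda>i. real_of_int (l i)"] by simp
  have s1: "(\<Sum>i\<in>L. real_of_int (l i)) \<ge> (\<Sum>i\<in>L. a - 2*c)"
    by (rule sum_mono) (use W Lsub in \<open>auto simp: Wc_def\<close>)
  have s2: "(\<Sum>i\<in>{..<n} - L. real_of_int (l i)) \<ge> (\<Sum>i\<in>{..<n} - L. real_of_int r + 1)"
    by (rule sum_mono) (auto simp: L_def)
  have "a * real n \<ge> real (card L) * (a - 2*c) + (real n - real (card L)) * (real_of_int r + 1)"
    using s s1 s2 sumI cL cLn by (simp add: of_nat_diff)
  then have "real (card L) * (real_of_int r + 1 - a + 2*c) \<ge> real n * (real_of_int r + 1 - a)"
    by (simp add: algebra_simps)
  moreover have "real n * (real_of_int r + 1 - a) \<ge> real n * (1/2)"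
    using r1 by (intro mult_left_mono) auto
  moreover have "real (card L) * (2*c + 3/2) \<ge> real (card L) * (real_of_int r + 1 - a + 2*c)"
    using r2 by (intro mult_left_mono) auto
  moreover have "real (card L) * (4*c+4) \<ge> real (card L) * (4*c + 3)"
    by (intro mult_left_mono) auto
  ultimately show "real (card {i. i < n \<and> l i \<le> r}) * (4*c+4) \<ge> real n"
    unfolding L_def[symmetric] by (simp only: ring_distribs; linarith)
next
  define L where "L = {i. i < n \<and> l i \<ge> r}"
  have Lsub: "L \<subseteq> {..<n}" unfolding L_def by auto
  have finL: "finite L" using Lsub finite_subset by blast
  have cL: "card ({..<n} - L) = n - card L" using Lsub finL by (simp add: card_Diff_subset)
  have cLn: "card L \<le> n" using card_mono[OF finite_lessThan Lsub] by simp
  have s: "(\<Sum>i<n. real_of_int (l i)) = (\<Sum>i\<in>L. real_of_int (l i)) + (\<Sum>i\<in>{..<n} - L. real_of_int (l i))"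
    using sum.subset_diff[OF Lsub finite_lessThan, of "\<lambda>i. real_of_int (l i)"] by simp
  have s1: "(\<Sum>i\<in>L. real_of_int (l i)) \<le> (\<Sum>i\<in>L. a + 2*c)"
    by (rule sum_mono) (use W Lsub in \<open>auto simp: Wc_def\<close>)
  have s2: "(\<Sum>i\<in>{..<n} - L. real_of_int (l i)) \<le> (\<Sum>i\<in>{..<n} - L. real_of_int r - 1)"
    by (rule sum_mono) (auto simp: L_def)
  have "a * real n \<le> real (card L) * (a + 2*c) + (real n - real (card L)) * (real_of_int r - 1)"
    using s s1 s2 sumI cL cLn by (simp add: of_nat_diff)
  then have "real (card L) * (a + 2*c - real_of_int r + 1) \<ge> real n * (a - real_of_int r + 1)"
    by (simp add: algebra_simps)
  moreover have "real n * (a - real_of_int r + 1) \<ge> real n * (1/2)"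
    using r2 by (intro mult_left_mono) auto
  moreover have "real (card L) * (2*c + 3/2) \<ge> real (card L) * (a + 2*c - real_of_int r + 1)"
    using r1 by (intro mult_left_mono) auto
  moreover have "real (card L) * (4*c+4) \<ge> real (card L) * (4*c + 3)"
    by (intro mult_left_mono) auto
  ultimately show "real (card {i. i < n \<and> l i \<ge> r}) * (4*c+4) \<ge> real n"
    unfolding L_def[symmetric] by (simp only: ring_distribs; linarith)
qed



lemma drift:
  fixes l :: "nat \<Rightarrow> int" and n :: nat and c a :: real and r :: int
  assumes n2: "n \<ge> 2" and c: "c > 0"
    and sumI: "real_of_int (\<Sum>i<n. l i) = a * real n"
    and W: "Wc c n a l" and r1: "a - 1/2 \<le> real_of_int r" and r2: "real_of_int r \<le> a + 1/2"
  shows "real_of_int (\<Sum>p\<in>node_pairs n. Exs n r (lb_step l p)) \<le>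
     real (card (node_pairs n)) * real_of_int (Exs n r l) - real_of_int (Exs n r l) * real n / (2*c*(4*c+4))"
proof -
  define S where "S = node_pairs n"
  define H where "H = {i. i < n \<and> l i \<ge> r + 2}"
  define Lo where "Lo = {i. i < n \<and> l i \<le> r - 2}"
  define L where "L = {i. i < n \<and> l i \<le> r}"
  define U where "U = {i. i < n \<and> l i \<ge> r}"
  define dec where "dec p = Exs n r l - Exs n r (lb_step l p)" for p
  have finS: "finite S" unfolding S_def by (rule np_fin)
  have finH: "finite H" "finite Lo" "finite L" "finite U" unfolding H_def Lo_def L_def U_def by auto
  have dec0: "dec p \<ge> 0" if "p \<in> S" for p
    using that step_Ex(1)[of "fst p" "snd p" n r l] unfolding dec_def S_def by auto
  have sub: "H \<times> L \<union> Lo \<times> U \<subseteq> S"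
    unfolding S_def node_pairs_def H_def L_def Lo_def U_def by auto
  have disj: "(H \<times> L) \<inter> (Lo \<times> U) = {}" unfolding H_def Lo_def by auto
  have dec1: "dec p \<ge> 1" if "p \<in> H \<times> L \<union> Lo \<times> U" for p
  proof -
    obtain u v where p: "p = (u, v)" by (cases p)
    have "(u, v) \<in> node_pairs n" using sub that p unfolding S_def by auto
    moreover have "(l u \<ge> r + 2 \<and> l v \<le> r) \<or> (l u \<le> r - 2 \<and> l v \<ge> r)"
      using that p unfolding H_def Lo_def L_def U_def by auto
    ultimately show ?thesis using step_Ex(2)[of u v n r l] unfolding dec_def p by linarith
  qed
  have "(\<Sum>p\<in>H \<times> L \<union> Lo \<times> U. dec p) \<le> (\<Sum>p\<in>S. dec p)"
    by (rule sum_mono2[OF finS sub]) (use dec0 in auto)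
  moreover have "(\<Sum>p\<in>H \<times> L \<union> Lo \<times> U. (1::int)) \<le> (\<Sum>p\<in>H \<times> L \<union> Lo \<times> U. dec p)"
    by (rule sum_mono) (rule dec1)
  moreover have "(\<Sum>p\<in>H \<times> L \<union> Lo \<times> U. (1::int)) = int (card H * card L + card Lo * card U)"
    using finH disj by (simp add: card_Un_disjoint card_cartesian_product)
  ultimately have decS: "real (card H * card L + card Lo * card U) \<le> real_of_int (\<Sum>p\<in>S. dec p)"
    by (metis (no_types, lifting) of_int_le_iff of_int_of_nat_eq order_trans)
  have K: "4*c+4 > 0" using c by simp
  have cL: "real (card L) * (4*c+4) \<ge> real n" and cU: "real (card U) * (4*c+4) \<ge> real n"
    using count_low[OF c sumI W r1 r2] unfolding L_def U_def by auto
  have "real (card H) * real n \<le> real (card H) * (real (card L) * (4*c+4))"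
    using cL by (intro mult_left_mono) auto
  moreover have "real (card Lo) * real n \<le> real (card Lo) * (real (card U) * (4*c+4))"
    using cU by (intro mult_left_mono) auto
  ultimately have "(real (card H) + real (card Lo)) * real n \<le> real (card H * card L + card Lo * card U) * (4*c+4)"
    by (simp add: algebra_simps)
  with decS K have decS2: "(real (card H) + real (card Lo)) * real n / (4*c+4) \<le> real_of_int (\<Sum>p\<in>S. dec p)"
    by (smt (verit, ccfv_SIG) divide_right_mono nonzero_mult_div_cancel_right)
  have HLsub: "H \<union> Lo \<subseteq> {..<n}" unfolding H_def Lo_def by auto
  have HLdisj: "H \<inter> Lo = {}" unfolding H_def Lo_def by auto
  have "Exs n r l = (\<Sum>i\<in>H \<union> Lo. e r (l i))"
    unfolding Exs_def
  proof (rule sum.mono_neutral_right[OF finite_lessThan HLsub], intro ballI)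
    fix i assume i: "i \<in> {..<n} - (H \<union> Lo)"
    then have "r - 1 \<le> l i \<and> l i \<le> r + 1" unfolding H_def Lo_def by auto
    then show "e r (l i) = 0" by (auto simp: e_cases)
  qed
  then have "real_of_int (Exs n r l) = (\<Sum>i\<in>H \<union> Lo. real_of_int (e r (l i)))" by simp
  also have "\<dots> \<le> (\<Sum>i\<in>H \<union> Lo. 2*c)"
  proof (rule sum_mono)
    fix i assume "i \<in> H \<union> Lo"
    then have "i < n" unfolding H_def Lo_def by auto
    then show "real_of_int (e r (l i)) \<le> 2*c"
      using W r1 r2 e_bound(1)[of a c "l i" r] unfolding Wc_def by auto
  qed
  also have "\<dots> = 2*c*(real (card H) + real (card Lo))"
    using finH HLdisj by (simp add: card_Un_disjoint algebra_simps)
  finally have Exb: "real_of_int (Exs n r l) \<le> 2*c*(real (card H) + real (card Lo))" .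
  have "real_of_int (Exs n r l) * real n / (2*c*(4*c+4)) \<le> 2*c*(real (card H) + real (card Lo)) * real n / (2*c*(4*c+4))"
    using Exb K c by (intro divide_right_mono mult_right_mono) auto
  also have "\<dots> = (real (card H) + real (card Lo)) * real n / (4*c+4)"
  proof -
    have nz: "c \<noteq> 0" "4*c+4 \<noteq> 0" using c by auto
    have "2*c*(real (card H) + real (card Lo)) * real n / (2*c*(4*c+4)) =
      (2*c)*((real (card H) + real (card Lo)) * real n) / ((2*c)*(4*c+4))" by (simp only: mult.assoc)
    also have "\<dots> = (real (card H) + real (card Lo)) * real n / (4*c+4)"
      by (rule mult_divide_mult_cancel_left) (use c in simp)
    finally show ?thesis .
  qed
  finally have main: "real_of_int (Exs n r l) * real n / (2*c*(4*c+4)) \<le> real_of_int (\<Sum>p\<in>S. dec p)"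
    using decS2 by linarith
  have "(\<Sum>p\<in>S. Exs n r (lb_step l p)) = (\<Sum>p\<in>S. Exs n r l) - (\<Sum>p\<in>S. dec p)"
    unfolding dec_def by (simp add: sum_subtractf)
  then have "real_of_int (\<Sum>p\<in>S. Exs n r (lb_step l p)) = real (card S) * real_of_int (Exs n r l) - real_of_int (\<Sum>p\<in>S. dec p)"
    by simp
  then show ?thesis using main unfolding S_def by linarith
qed



lemma notG_pair:
  fixes l :: "nat \<Rightarrow> int" and n :: nat and c a :: real
  assumes n2: "n \<ge> 2" and c: "c \<ge> 1/2"
    and sumI: "real_of_int (\<Sum>i<n. l i) = a * real n"
    and nG: "\<not> Gc c n a l"
  shows "\<exists>u v. (u, v) \<in> node_pairs n \<and> \<bar>l u - l v\<bar> \<ge> 2"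
proof (rule ccontr)
  assume nex: "\<not> (\<exists>u v. (u, v) \<in> node_pairs n \<and> \<bar>l u - l v\<bar> \<ge> 2)"
  have close: "\<bar>l u - l v\<bar> \<le> 1" if "u < n" "v < n" for u v
  proof (cases "u = v")
    case False
    then have "\<not> 2 \<le> \<bar>l u - l v\<bar>" using nex that by (auto simp: node_pairs_def)
    then show ?thesis by linarith
  qed simp
  define m where "m = Min (l ` {..<n})"
  have "0 \<in> {..<n}" using n2 by simp
  then have ne: "l ` {..<n} \<noteq> {}" by blast
  have "m \<in> l ` {..<n}" unfolding m_def by (rule Min_in) (use ne in auto)
  then obtain i0 where i0: "i0 < n" "l i0 = m" by auto
  have mle: "m \<le> l i" if "i < n" for i unfolding m_def using that by (intro Min_le) auto
  have vals: "l i = m \<or> l i = m + 1" if "i < n" for i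
    using close[OF that i0(1)] mle[OF that] i0 by auto
  define d where "d i = real_of_int (l i - m)" for i
  define t where "t = a - real_of_int m"
  have d01: "d i = 0 \<or> d i = 1" if "i < n" for i using vals[OF that] unfolding d_def by auto
  have dsq: "(d i)^2 = d i" if "i < n" for i using d01[OF that] by auto
  have sd: "(\<Sum>i<n. d i) = real n * t"
    unfolding d_def t_def using sumI by (simp add: sum_subtractf algebra_simps)
  have sd0: "(\<Sum>i<n. d i) \<ge> 0" by (rule sum_nonneg) (use d01 in force)
  have sd1: "(\<Sum>i<n. d i) \<le> (\<Sum>i<n. 1)" by (rule sum_mono) (use d01 in force)
  have npos: "real n > 0" using n2 by simp
  have t0: "t \<ge> 0" using sd sd0 npos by (simp add: zero_le_mult_iff)
  have t1: "t \<le> 1" using sd sd1 npos by simp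
  have "Phi n a l = (\<Sum>i<n. (d i - t)^2)"
    unfolding Phi_def d_def t_def by (simp add: algebra_simps)
  also have "\<dots> = (\<Sum>i<n. (d i)^2 - 2*t*d i + t^2)"
    by (simp add: power2_eq_square algebra_simps)
  also have "\<dots> = (\<Sum>i<n. d i - 2*t*d i + t^2)"
    by (rule sum.cong) (auto simp: dsq)
  also have "\<dots> = (\<Sum>i<n. d i) - 2*t*(\<Sum>i<n. d i) + real n * t^2"
    by (simp add: sum.distrib sum_subtractf sum_distrib_left)
  also have "\<dots> = real n * (t * (1 - t))"
    unfolding sd by (simp add: power2_eq_square algebra_simps)
  also have "\<dots> < real n"
  proof -
    have "t * (1 - t) \<le> 1/4"
    proof -
      have "0 \<le> (t - 1/2)^2" by simp
      then show ?thesis by (simp add: power2_eq_square algebra_simps)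
    qed
    then have "real n * (t * (1 - t)) \<le> real n * (1/4)" using npos by (intro mult_left_mono) auto
    then show ?thesis using npos by linarith
  qed
  finally have P: "Phi n a l < real n" .
  have "Wc c n a l"
    unfolding Wc_def
  proof (intro allI impI)
    fix i assume i: "i < n"
    have "real_of_int (l i) = real_of_int m + d i" unfolding d_def by simp
    moreover have "a = real_of_int m + t" unfolding t_def by simp
    ultimately show "a - 2 * c \<le> real_of_int (l i) \<and> real_of_int (l i) \<le> a + 2 * c"
      using d01[OF i] t0 t1 c by auto
  qed
  with P nG show False unfolding Gc_def by auto
qed



definition Pr :: "nat \<Rightarrow> (nat \<Rightarrow> int) \<Rightarrow> nat \<Rightarrow> ((nat \<Rightarrow> int) \<Rightarrow> bool) \<Rightarrow> real" where
  "Pr n l t R = measure (pair_space n) {\<omega> \<in> space (pair_space n). R (load l \<omega> t)}"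

lemma Pr_Suc2: "n \<ge> 2 \<Longrightarrow> Pr n l (Suc t) R = (\<Sum>p\<in>node_pairs n. Pr n (lb_step l p) t R) / card (node_pairs n)"
  unfolding Pr_def by (rule Pr_Suc)

lemma Pr_0: "Pr n l 0 R = (if R l then 1 else 0)"
proof -
  interpret P: prob_space "pair_space n" by (rule ps_prob)
  show ?thesis unfolding Pr_def by (simp add: P.prob_space)
qed

lemma Pr_nonneg: "Pr n l t R \<ge> 0" unfolding Pr_def by simp

lemma avg_le:
  assumes n2: "n \<ge> 2" and b: "\<And>p. p \<in> node_pairs n \<Longrightarrow> f p \<le> B"
  shows "(\<Sum>p\<in>node_pairs n. f p) / card (node_pairs n) \<le> (B::real)"
proof -
  have "(\<Sum>p\<in>node_pairs n. f p) \<le> (\<Sum>p\<in>node_pairs n. B)" by (rule sum_mono) (rule b)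
  then have "(\<Sum>p\<in>node_pairs n. f p) \<le> real (card (node_pairs n)) * B" by simp
  then show ?thesis using np_card_pos[OF n2] by (simp add: divide_le_eq mult.commute)
qed

lemma step_inv: "p \<in> node_pairs n \<Longrightarrow> (\<Sum>i<n. lb_step l p i) = (\<Sum>i<n. l i)"
  by (cases p) (simp add: step_sum)

lemma drift_prob:
  fixes c a :: real and r s :: int and n :: nat
  assumes n2: "n \<ge> 2" and c2: "c \<ge> 1/2" and sa: "real_of_int s = a * real n"
    and r1: "a - 1/2 \<le> real_of_int r" and r2: "real_of_int r \<le> a + 1/2"
    and q: "q = 1 / (2*c*(4*c+4) * real n)"
  shows "\<forall>l. (\<Sum>i<n. l i) = s \<longrightarrow> Wc c n a l \<longrightarrow>
     Pr n l t (\<lambda>l. \<not> Tg n r l) \<le> real_of_int (Exs n r l) * (1 - q)^t"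
proof (induction t)
  case 0
  show ?case
  proof (intro allI impI)
    fix l :: "nat \<Rightarrow> int"
    show "Pr n l 0 (\<lambda>l. \<not> Tg n r l) \<le> real_of_int (Exs n r l) * (1 - q)^0"
      using Exs_nonneg[of n r l] Tg_iff[of n r l] by (auto simp: Pr_0)
  qed
next
  case (Suc t)
  have c: "c > 0" using c2 by simp
  have K: "2*c*(4*c+4) \<ge> 1"
  proof -
    have "1 * 1 \<le> (2*c)*(4*c+4)" using c2 by (intro mult_mono) auto
    then show ?thesis by simp
  qed
  have npos: "real n \<ge> 2" using n2 by simp
  have Kn: "2*c*(4*c+4) * real n \<ge> 1"
  proof -
    have "1 * 1 \<le> (2*c*(4*c+4)) * real n" using K npos by (intro mult_mono) auto
    then show ?thesis by simp
  qed
  have gen: "\<And>D::real. 1 \<le> D \<Longrightarrow> 0 \<le> 1/D \<and> 1/D \<le> 1" by auto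
  have q0: "0 \<le> q" "q \<le> 1" using gen[OF Kn] unfolding q by auto
  show ?case
  proof (intro allI impI)
    fix l :: "nat \<Rightarrow> int"
    assume inv: "(\<Sum>i<n. l i) = s" and W: "Wc c n a l"
    define S where "S = node_pairs n"
    have cS: "real (card S) > 0" "real (card S) \<le> real n * real n"
      unfolding S_def using np_card_pos[OF n2] np_card[of n] by (auto simp flip: of_nat_mult)
    have "Pr n l (Suc t) (\<lambda>l. \<not> Tg n r l) = (\<Sum>p\<in>S. Pr n (lb_step l p) t (\<lambda>l. \<not> Tg n r l)) / card S"
      unfolding S_def by (rule Pr_Suc2[OF n2])
    also have "\<dots> \<le> (\<Sum>p\<in>S. real_of_int (Exs n r (lb_step l p)) * (1 - q)^t) / card S"
    proof (intro divide_right_mono sum_mono)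
      fix p assume p: "p \<in> S"
      show "Pr n (lb_step l p) t (\<lambda>l. \<not> Tg n r l) \<le> real_of_int (Exs n r (lb_step l p)) * (1 - q)^t"
        using Suc.IH p inv W step_inv[of p n l] Wc_step[of "fst p" "snd p" n c a l] unfolding S_def by auto
    qed simp
    also have "\<dots> = (1 - q)^t * real_of_int (\<Sum>p\<in>S. Exs n r (lb_step l p)) / card S"
      by (simp add: sum_distrib_left mult.commute)
    also have "\<dots> \<le> (1 - q)^t * (real (card S) * real_of_int (Exs n r l) - real_of_int (Exs n r l) * real n / (2*c*(4*c+4))) / card S"
      using drift[OF n2 c _ W r1 r2] inv sa q0 unfolding S_def
      by (intro divide_right_mono mult_left_mono) auto
    also have "\<dots> \<le> (1 - q)^t * ((1 - q) * real_of_int (Exs n r l))"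
    proof -
      have "(real (card S) * real_of_int (Exs n r l) - real_of_int (Exs n r l) * real n / (2*c*(4*c+4))) / card S
          = real_of_int (Exs n r l) - real_of_int (Exs n r l) * (real n / (2*c*(4*c+4) * card S))"
      proof -
        have gen: "\<And>x1 x2 x3 x4::real. x3 > 0 \<Longrightarrow> x4 > 0 \<Longrightarrow> (x4*x1 - x1*x2/x3)/x4 = x1 - x1*(x2/(x3*x4))"
          by (simp add: field_simps)
        show ?thesis by (rule gen) (use cS c in auto)
      qed
      also have "\<dots> \<le> real_of_int (Exs n r l) - real_of_int (Exs n r l) * q"
      proof -
        have "q = real n / (2*c*(4*c+4) * (real n * real n))" unfolding q using npos by simp
        also have "\<dots> \<le> real n / (2*c*(4*c+4) * card S)"
          using cS K c npos by (intro divide_left_mono mult_left_mono mult_pos_pos) auto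
        finally have "q \<le> real n / (2*c*(4*c+4) * card S)" .
        then have "real_of_int (Exs n r l) * q \<le> real_of_int (Exs n r l) * (real n / (2*c*(4*c+4) * card S))"
          using Exs_nonneg[of n r l] by (intro mult_left_mono) auto
        then show ?thesis by linarith
      qed
      finally have X: "(real (card S) * real_of_int (Exs n r l) - real_of_int (Exs n r l) * real n / (2*c*(4*c+4))) / card S
          \<le> (1 - q) * real_of_int (Exs n r l)" by (simp add: algebra_simps)
      have "(1 - q)^t * ((real (card S) * real_of_int (Exs n r l) - real_of_int (Exs n r l) * real n / (2*c*(4*c+4))) / card S)
          \<le> (1 - q)^t * ((1 - q) * real_of_int (Exs n r l))"
        using q0 X by (intro mult_left_mono) auto
      then show ?thesis by (simp only: times_divide_eq_right)
    qed
    finally show "Pr n l (Suc t) (\<lambda>l. \<not> Tg n r l) \<le> real_of_int (Exs n r l) * (1 - q)^Suc t"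
      by (simp add: algebra_simps)
  qed
qed



definition Fev :: "real \<Rightarrow> nat \<Rightarrow> real \<Rightarrow> int \<Rightarrow> nat \<Rightarrow> nat \<Rightarrow> (nat \<Rightarrow> int) \<Rightarrow> (nat \<times> nat) stream \<Rightarrow> bool" where
  "Fev c n a r \<tau> N l \<omega> \<longleftrightarrow> (\<exists>s<N. Wc c n a (load l \<omega> s) \<and> (\<forall>s'<s. \<not> Wc c n a (load l \<omega> s')) \<and>
      \<not> Tg n r (load l \<omega> (s + \<tau>)))"

lemma Fev_Suc: "Fev c n a r \<tau> (Suc N) l \<omega> \<longleftrightarrow>
   (Wc c n a l \<and> \<not> Tg n r (load l \<omega> \<tau>)) \<or> (\<not> Wc c n a l \<and> Fev c n a r \<tau> N (lb_step l (shd \<omega>)) (stl \<omega>))"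
  unfolding Fev_def Ex_less_Suc2 All_less_Suc2
  by (simp del: load.simps(2) add: load_Suc') blast

lemma Fev_0: "\<not> Fev c n a r \<tau> 0 l \<omega>" unfolding Fev_def by simp

lemma pred_Fev: "Measurable.pred (pair_space n) (Fev c n a r \<tau> N l)"
  unfolding Fev_def
  by (intro pred_intros_countable pred_intros_logic pred_load measurable_const) auto

lemma Fev_bound:
  assumes n2: "n \<ge> 2" and B0: "B \<ge> 0"
    and hB: "\<And>l. (\<Sum>i<n. l i) = s \<Longrightarrow> Wc c n a l \<Longrightarrow> Pr n l \<tau> (\<lambda>l. \<not> Tg n r l) \<le> B"
  shows "\<forall>l. (\<Sum>i<n. l i) = s \<longrightarrow> measure (pair_space n) {\<omega> \<in> space (pair_space n). Fev c n a r \<tau> N l \<omega>} \<le> B"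
proof (induction N)
  case 0
  then show ?case using B0 by (simp add: Fev_0)
next
  case (Suc N)
  show ?case
  proof (intro allI impI)
    fix l :: "nat \<Rightarrow> int" assume inv: "(\<Sum>i<n. l i) = s"
    show "measure (pair_space n) {\<omega> \<in> space (pair_space n). Fev c n a r \<tau> (Suc N) l \<omega>} \<le> B"
    proof (cases "Wc c n a l")
      case True
      then have "{\<omega> \<in> space (pair_space n). Fev c n a r \<tau> (Suc N) l \<omega>} =
          {\<omega> \<in> space (pair_space n). \<not> Tg n r (load l \<omega> \<tau>)}" by (simp add: Fev_Suc)
      then show ?thesis using hB[OF inv True] unfolding Pr_def by simp
    next
      case False
      then have "{\<omega> \<in> space (pair_space n). Fev c n a r \<tau> (Suc N) l \<omega>} =
          {\<omega> \<in> space (pair_space n). Fev c n a r \<tau> N (lb_step l (shd \<omega>)) (stl \<omega>)}" by (simp add: Fev_Suc)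
      also have "measure (pair_space n) \<dots> = (\<Sum>p\<in>node_pairs n. measure (pair_space n)
           {\<omega> \<in> space (pair_space n). Fev c n a r \<tau> N (lb_step l p) \<omega>}) / card (node_pairs n)"
        by (rule first_step[OF n2 pred_Fev])
      also have "\<dots> \<le> B"
        by (rule avg_le[OF n2]) (use Suc.IH inv step_inv in auto)
      finally show ?thesis .
    qed
  qed
qed

lemma notG_mono:
  assumes n2: "n \<ge> 2"
  shows "\<forall>l. Pr n l (Suc t) (\<lambda>l. \<not> Gc c n a l) \<le> Pr n l t (\<lambda>l. \<not> Gc c n a l)"
proof (induction t)
  case 0
  show ?case
  proof
    fix l
    show "Pr n l (Suc 0) (\<lambda>l. \<not> Gc c n a l) \<le> Pr n l 0 (\<lambda>l. \<not> Gc c n a l)"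
      unfolding Pr_Suc2[OF n2]
    proof (cases "Gc c n a l")
      case True
      then have "\<forall>p\<in>node_pairs n. Gc c n a (lb_step l p)" using Gc_step by (metis prod.collapse)
      then show "(\<Sum>p\<in>node_pairs n. Pr n (lb_step l p) 0 (\<lambda>l. \<not> Gc c n a l)) / card (node_pairs n)
          \<le> Pr n l 0 (\<lambda>l. \<not> Gc c n a l)" using True by (simp add: Pr_0)
    next
      case False
      show "(\<Sum>p\<in>node_pairs n. Pr n (lb_step l p) 0 (\<lambda>l. \<not> Gc c n a l)) / card (node_pairs n)
          \<le> Pr n l 0 (\<lambda>l. \<not> Gc c n a l)" using False
        by (simp add: Pr_0) (rule avg_le[OF n2], simp)
    qed
  qed
next
  case (Suc t)
  show ?case
  proof
    fix l
    show "Pr n l (Suc (Suc t)) (\<lambda>l. \<not> Gc c n a l) \<le> Pr n l (Suc t) (\<lambda>l. \<not> Gc c n a l)"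
      unfolding Pr_Suc2[OF n2[THEN le_trans[OF order_refl]], of l "Suc t"] Pr_Suc2[OF n2, of l t]
      using np_card_pos[OF n2] Suc.IH
      by (intro divide_right_mono sum_mono) auto
  qed
qed



lemma notG_sum:
  assumes n2: "n \<ge> 2" and c2: "c \<ge> 1/2" and sa: "real_of_int s = a * real n"
  shows "\<forall>l. (\<Sum>i<n. l i) = s \<longrightarrow>
    (\<Sum>t<N. Pr n l t (\<lambda>l. \<not> Gc c n a l)) \<le> real_of_int (Qs n l) * real (card (node_pairs n))"
proof (induction N)
  case 0
  then show ?case using Qs_nonneg by simp
next
  case (Suc N)
  show ?case
  proof (intro allI impI)
    fix l :: "nat \<Rightarrow> int" assume inv: "(\<Sum>i<n. l i) = s"
    define S where "S = node_pairs n"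
    define f where "f t = Pr n l t (\<lambda>l. \<not> Gc c n a l)" for t
    have cS: "real (card S) > 0" unfolding S_def using np_card_pos[OF n2] by simp
    have "(\<Sum>t<N. f (Suc t)) = (\<Sum>t<N. (\<Sum>p\<in>S. Pr n (lb_step l p) t (\<lambda>l. \<not> Gc c n a l)) / card S)"
      unfolding f_def S_def using Pr_Suc2[OF n2] by simp
    also have "\<dots> = (\<Sum>p\<in>S. (\<Sum>t<N. Pr n (lb_step l p) t (\<lambda>l. \<not> Gc c n a l))) / card S"
      by (simp add: sum_divide_distrib[symmetric] sum.swap[of _ S])
    also have "\<dots> \<le> (\<Sum>p\<in>S. real_of_int (Qs n (lb_step l p)) * real (card S)) / card S"
      using Suc.IH inv step_inv unfolding S_def by (intro divide_right_mono sum_mono) auto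
    also have "\<dots> = (\<Sum>p\<in>S. real_of_int (Qs n (lb_step l p)))"
      using cS by (simp add: sum_distrib_right[symmetric])
    finally have A: "(\<Sum>t<N. f (Suc t)) \<le> (\<Sum>p\<in>S. real_of_int (Qs n (lb_step l p)))" .
    have B: "f 0 + (\<Sum>p\<in>S. real_of_int (Qs n (lb_step l p))) \<le> real_of_int (Qs n l) * real (card S)"
    proof (cases "Gc c n a l")
      case True
      then have "f 0 = 0" unfolding f_def by (simp add: Pr_0)
      moreover have "(\<Sum>p\<in>S. real_of_int (Qs n (lb_step l p))) \<le> (\<Sum>p\<in>S. real_of_int (Qs n l))"
        by (rule sum_mono) (use step_Q(1) in \<open>auto simp: S_def\<close>)
      ultimately show ?thesis by (simp add: mult.commute)
    next
      case False
      then have f0: "f 0 = 1" unfolding f_def by (simp add: Pr_0)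
      have sumI: "real_of_int (\<Sum>i<n. l i) = a * real n" using inv sa by simp
      obtain u v where uv: "(u, v) \<in> node_pairs n" "\<bar>l u - l v\<bar> \<ge> 2"
        using notG_pair[OF n2 c2 sumI False] by blast
      have "(\<Sum>p\<in>S. real_of_int (Qs n (lb_step l p))) \<le>
          (\<Sum>p\<in>S. real_of_int (Qs n l) - (if p = (u, v) then 1 else 0))"
      proof (rule sum_mono)
        fix p assume p: "p \<in> S"
        show "real_of_int (Qs n (lb_step l p)) \<le> real_of_int (Qs n l) - (if p = (u, v) then 1 else 0)"
        proof (cases "p = (u, v)")
          case True
          then show ?thesis using step_Q(2)[OF uv] by simp
        next
          case False
          then show ?thesis using step_Q(1)[of "fst p" "snd p" n l] p unfolding S_def by simp
        qed
      qed
      also have "\<dots> = real (card S) * real_of_int (Qs n l) - 1"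
        using uv(1) np_fin[of n] unfolding S_def by (simp add: sum_subtractf)
      finally show ?thesis using f0 by (simp add: algebra_simps)
    qed
    have "(\<Sum>t<Suc N. f t) = f 0 + (\<Sum>t<N. f (Suc t))" by (rule sum.lessThan_Suc_shift)
    then show "(\<Sum>t<Suc N. Pr n l t (\<lambda>l. \<not> Gc c n a l)) \<le> real_of_int (Qs n l) * real (card (node_pairs n))"
      using A B unfolding f_def S_def by linarith
  qed
qed

lemma notG_tail:
  assumes n2: "n \<ge> 2" and c2: "c \<ge> 1/2" and sa: "real_of_int s = a * real n"
    and inv: "(\<Sum>i<n. l i) = s" and N: "N \<ge> 1"
  shows "Pr n l N (\<lambda>l. \<not> Gc c n a l) \<le> real_of_int (Qs n l) * real (card (node_pairs n)) / real N"
proof -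
  define f where "f t = Pr n l t (\<lambda>l. \<not> Gc c n a l)" for t
  have mono: "f (t + k) \<le> f t" for t k
  proof (induction k)
    case (Suc k)
    have "f (Suc (t + k)) \<le> f (t + k)" unfolding f_def using notG_mono[OF n2] by blast
    then show ?case using Suc by simp
  qed simp
  have "real N * f N = (\<Sum>t<N. f N)" by simp
  also have "\<dots> \<le> (\<Sum>t<N. f t)"
  proof (rule sum_mono)
    fix t assume "t \<in> {..<N}"
    then have "N = t + (N - t)" by simp
    then show "f N \<le> f t" using mono[of t "N - t"] by simp
  qed
  also have "\<dots> \<le> real_of_int (Qs n l) * real (card (node_pairs n))"
    using notG_sum[OF n2 c2 sa] inv unfolding f_def by blast
  finally show ?thesis unfolding f_def using N by (simp add: field_simps)
qed



lemma hit_from_enat: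
  assumes "s0 \<le> t" "P t"
  shows "\<exists>m. hit_from (enat s0) P = enat m \<and> s0 \<le> m \<and> m \<le> t \<and> P m"
proof -
  have ex: "\<exists>t\<ge>s0. P t" using assms by blast
  define m where "m = (LEAST t. s0 \<le> t \<and> P t)"
  have "s0 \<le> m \<and> P m" unfolding m_def by (rule LeastI[of _ t]) (use assms in auto)
  moreover have "m \<le> t" unfolding m_def by (rule Least_le) (use assms in auto)
  moreover have "hit_from (enat s0) P = enat m" unfolding hit_from_def m_def using ex by simp
  ultimately show ?thesis by blast
qed

lemma hit_from_pre:
  "hit_from (enat s0) P = enat m \<longleftrightarrow> (s0 \<le> m \<and> P m \<and> (\<forall>t. s0 \<le> t \<and> t < m \<longrightarrow> \<not> P t))"
proof
  assume h: "hit_from (enat s0) P = enat m"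
  then have ex: "\<exists>t\<ge>s0. P t" unfolding hit_from_def by (auto split: if_splits)
  then have m: "m = (LEAST t. s0 \<le> t \<and> P t)" using h unfolding hit_from_def by auto
  obtain t where t: "s0 \<le> t" "P t" using ex by blast
  have "s0 \<le> m \<and> P m" unfolding m by (rule LeastI[of _ t]) (use t in auto)
  moreover have "\<not> P t'" if "s0 \<le> t'" "t' < m" for t'
    using not_less_Least[of t' "\<lambda>t. s0 \<le> t \<and> P t"] that unfolding m by auto
  ultimately show "s0 \<le> m \<and> P m \<and> (\<forall>t. s0 \<le> t \<and> t < m \<longrightarrow> \<not> P t)" by blast
next
  assume h: "s0 \<le> m \<and> P m \<and> (\<forall>t. s0 \<le> t \<and> t < m \<longrightarrow> \<not> P t)"
  then have "(LEAST t. s0 \<le> t \<and> P t) = m"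
    by (intro Least_equality) (auto simp: not_less[symmetric])
  then show "hit_from (enat s0) P = enat m" unfolding hit_from_def using h by auto
qed

lemma hit_from_inf: "hit_from (enat s0) P = \<infinity> \<longleftrightarrow> (\<forall>t. s0 \<le> t \<longrightarrow> \<not> P t)"
  unfolding hit_from_def by auto

lemma meas_hit_fixed:
  assumes R: "\<And>t. Measurable.pred M (\<lambda>\<omega>. R \<omega> t)"
  shows "(\<lambda>\<omega>. hit_from j (R \<omega>)) \<in> measurable M (count_space UNIV)"
proof (cases j)
  case (enat s0)
  show ?thesis
    unfolding measurable_count_space_eq2_countable
  proof (intro conjI ballI)
    show "(\<lambda>\<omega>. hit_from j (R \<omega>)) \<in> space M \<rightarrow> UNIV" by simp
    fix x :: enat assume "x \<in> UNIV"
    show "(\<lambda>\<omega>. hit_from j (R \<omega>)) -` {x} \<inter> space M \<in> sets M"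
    proof (cases x)
      case (enat m)
      have "(\<lambda>\<omega>. hit_from j (R \<omega>)) -` {x} \<inter> space M =
          {\<omega> \<in> space M. s0 \<le> m \<and> R \<omega> m \<and> (\<forall>t. s0 \<le> t \<and> t < m \<longrightarrow> \<not> R \<omega> t)}"
        unfolding \<open>j = enat s0\<close> enat using hit_from_pre[of s0 "R _" m] by auto
      also have "\<dots> \<in> sets M"
      proof -
        have c1: "Measurable.pred M (\<lambda>\<omega>. b)" for b :: bool by simp
        have "Measurable.pred M (\<lambda>\<omega>. s0 \<le> m \<and> R \<omega> m \<and> (\<forall>t. s0 \<le> t \<and> t < m \<longrightarrow> \<not> R \<omega> t))"
          by (intro pred_intros_logic(3) pred_intros_countable(1) pred_intros_logic(4) pred_intros_logic(2) c1 R)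
        then show ?thesis unfolding pred_def .
      qed
      finally show ?thesis .
    next
      case infinity
      have "(\<lambda>\<omega>. hit_from j (R \<omega>)) -` {x} \<inter> space M = {\<omega> \<in> space M. \<forall>t. s0 \<le> t \<longrightarrow> \<not> R \<omega> t}"
        unfolding \<open>j = enat s0\<close> infinity using hit_from_inf[of s0 "R _"] by auto
      also have "\<dots> \<in> sets M"
      proof -
        have c1: "Measurable.pred M (\<lambda>\<omega>. b)" for b :: bool by simp
        have "Measurable.pred M (\<lambda>\<omega>. \<forall>t. s0 \<le> t \<longrightarrow> \<not> R \<omega> t)"
          by (intro pred_intros_countable(1) pred_intros_logic(4) pred_intros_logic(2) c1 R)
        then show ?thesis unfolding pred_def .
      qed
      finally show ?thesis .
    qed
  qed
next
  case infinity
  then have "(\<lambda>\<omega>. hit_from j (R \<omega>)) = (\<lambda>\<omega>. \<infinity>)" by (simp add: hit_from_def)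
  then show ?thesis by simp
qed

lemma meas_hit:
  assumes k: "k \<in> measurable M (count_space UNIV)" and R: "\<And>t. Measurable.pred M (\<lambda>\<omega>. R \<omega> t)"
  shows "(\<lambda>\<omega>. hit_from (k \<omega>) (R \<omega>)) \<in> measurable M (count_space UNIV)"
  by (rule measurable_compose_countable[OF meas_hit_fixed[OF R] k])



lemma ne_img: "(n::nat) \<ge> 1 \<Longrightarrow> l ` {..<n} \<noteq> {}"
proof -
  assume "n \<ge> 1" then have "0 \<in> {..<n}" by simp
  then show ?thesis by blast
qed

lemma W_conv:
  assumes "n \<ge> 1"
  shows "(real_of_int (maxload n l) \<le> a + 2*c \<and> real_of_int (minload n l) \<ge> a - 2*c) \<longleftrightarrow> Wc c n a l"
proof -
  have f: "finite (l ` {..<n})" by simp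
  have "real_of_int (maxload n l) \<le> a + 2*c \<longleftrightarrow> maxload n l \<le> \<lfloor>a + 2*c\<rfloor>" by (simp add: le_floor_iff)
  also have "\<dots> \<longleftrightarrow> (\<forall>i<n. l i \<le> \<lfloor>a + 2*c\<rfloor>)" unfolding maxload_def using Max_le_iff[OF f ne_img[OF assms]] by auto
  also have "\<dots> \<longleftrightarrow> (\<forall>i<n. real_of_int (l i) \<le> a + 2*c)" by (simp add: le_floor_iff)
  finally have 1: "real_of_int (maxload n l) \<le> a + 2*c \<longleftrightarrow> (\<forall>i<n. real_of_int (l i) \<le> a + 2*c)" .
  have "real_of_int (minload n l) \<ge> a - 2*c \<longleftrightarrow> minload n l \<ge> \<lceil>a - 2*c\<rceil>" by (simp add: ceiling_le_iff)
  also have "\<dots> \<longleftrightarrow> (\<forall>i<n. l i \<ge> \<lceil>a - 2*c\<rceil>)" unfolding minload_def using Min_ge_iff[OF f ne_img[OF assms]] by auto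
  also have "\<dots> \<longleftrightarrow> (\<forall>i<n. real_of_int (l i) \<ge> a - 2*c)" by (simp add: ceiling_le_iff)
  finally have 2: "real_of_int (minload n l) \<ge> a - 2*c \<longleftrightarrow> (\<forall>i<n. real_of_int (l i) \<ge> a - 2*c)" .
  show ?thesis unfolding 1 2 Wc_def by auto
qed

lemma T_conv:
  assumes "n \<ge> 1"
  shows "(maxload n l \<le> r + 1 \<and> minload n l \<ge> r - 1) \<longleftrightarrow> Tg n r l"
proof -
  have f: "finite (l ` {..<n})" by simp
  show ?thesis unfolding maxload_def minload_def Tg_def
    using Max_le_iff[OF f ne_img[OF assms]] Min_ge_iff[OF f ne_img[OF assms]] by auto
qed

lemma AE_valid:
  assumes n2: "n \<ge> 2"
  shows "AE \<omega> in pair_space n. \<forall>i. \<omega> !! i \<in> node_pairs n"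
proof -
  have m: "Measurable.pred (PM n) (\<lambda>x. x \<in> node_pairs n)"
    by (subst measurable_cong_sets[OF sets_measure_pmf_count_space refl]) simp
  have ae: "AE x in PM n. x \<in> node_pairs n"
    using np_ne[OF n2] np_fin[of n] by (simp add: AE_measure_pmf_iff)
  have "AE \<omega> in stream_space (PM n). stream_all (\<lambda>x. x \<in> node_pairs n) \<omega>"
    by (rule prob_space.AE_stream_all[OF prob_space_measure_pmf m ae])
  then show ?thesis unfolding pair_space_def stream_all_def .
qed

lemma valid_prob:
  assumes n2: "n \<ge> 2"
  shows "measure (pair_space n) {\<omega> \<in> space (pair_space n). \<not> (\<forall>i. \<omega> !! i \<in> node_pairs n)} = 0"
proof -
  interpret P: prob_space "pair_space n" by (rule ps_prob)
  have m: "Measurable.pred (pair_space n) (\<lambda>\<omega>. \<forall>i. \<omega> !! i \<in> node_pairs n)"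
  proof (intro pred_intros_countable(1))
    fix i
    have "(\<lambda>\<omega>. \<omega> !! i) \<in> measurable (pair_space n) (count_space UNIV)"
      unfolding pair_space_def
      using measurable_snth[of i "PM n"] by (simp add: measurable_cong_sets[OF refl sets_measure_pmf_count_space])
    then show "Measurable.pred (pair_space n) (\<lambda>\<omega>. \<omega> !! i \<in> node_pairs n)"
      by (rule measurable_compose) simp
  qed
  have "P.prob {\<omega> \<in> space (pair_space n). \<forall>i. \<omega> !! i \<in> node_pairs n} = 1"
    using P.prob_Collect_eq_1[of "\<lambda>\<omega>. \<forall>i. \<omega> !! i \<in> node_pairs n"] m AE_valid[OF n2]
    unfolding pred_def by blast
  moreover have "{\<omega> \<in> space (pair_space n). \<not> (\<forall>i. \<omega> !! i \<in> node_pairs n)} =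
     space (pair_space n) - {\<omega> \<in> space (pair_space n). \<forall>i. \<omega> !! i \<in> node_pairs n}" by auto
  ultimately show ?thesis using P.prob_compl[of "{\<omega> \<in> space (pair_space n). \<forall>i. \<omega> !! i \<in> node_pairs n}"] m
    unfolding pred_def by simp
qed

lemma Tg_mono_valid:
  assumes v: "\<forall>i. \<omega> !! i \<in> node_pairs n" and T: "Tg n r (load l \<omega> s)"
  shows "Tg n r (load l \<omega> (s + k))"
proof (induction k)
  case 0
  then show ?case using T by simp
next
  case (Suc k)
  have "\<omega> !! (s + k) \<in> node_pairs n" using v by blast
  then have "Tg n r (lb_step (load l \<omega> (s + k)) (fst (\<omega> !! (s + k)), snd (\<omega> !! (s + k))))"
    using Tg_step Suc.IH by (metis prod.collapse)
  then show ?case by simp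
qed



lemma good_incl:
  fixes c :: real and l0 :: "nat \<Rightarrow> int"
  assumes n2: "n \<ge> 2" and a: "a = avg n l0" and r: "r = round a"
    and v: "\<forall>i. \<omega> !! i \<in> node_pairs n"
    and G: "Gc c n a (load l0 \<omega> N)" and nF: "\<not> Fev c n a r \<tau> (Suc N) l0 \<omega>"
  shows "\<exists>t2 t3. T2 c n l0 \<omega> = enat t2 \<and> T3 c n l0 \<omega> = enat t3 \<and> t3 \<le> t2 + \<tau>"
proof -
  have n1: "n \<ge> 1" using n2 by simp
  obtain t1 where t1: "T1 n l0 \<omega> = enat t1" "t1 \<le> N"
    using hit_from_enat[of 0 N "\<lambda>t. Phi n (avg n l0) (load l0 \<omega> t) < real n"] G a
    unfolding T1_def Gc_def zero_enat_def by auto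
  obtain t2 where t2: "T2 c n l0 \<omega> = enat t2" "t2 \<le> N" "Wc c n a (load l0 \<omega> t2)"
    using hit_from_enat[of t1 N "\<lambda>t. real_of_int (maxload n (load l0 \<omega> t)) \<le> avg n l0 + 2 * c \<and>
          real_of_int (minload n (load l0 \<omega> t)) \<ge> avg n l0 - 2 * c"] G a t1 W_conv[OF n1]
    unfolding T2_def Gc_def by auto
  define s0 where "s0 = (LEAST s. Wc c n a (load l0 \<omega> s))"
  have s0W: "Wc c n a (load l0 \<omega> s0)" unfolding s0_def by (rule LeastI[of _ t2]) (rule t2(3))
  have s0le: "s0 \<le> t2" unfolding s0_def by (rule Least_le) (rule t2(3))
  have s0min: "\<forall>s'<s0. \<not> Wc c n a (load l0 \<omega> s')" unfolding s0_def using not_less_Least by blast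
  have "Tg n r (load l0 \<omega> (s0 + \<tau>))"
  proof (rule ccontr)
    assume "\<not> Tg n r (load l0 \<omega> (s0 + \<tau>))"
    then have "Fev c n a r \<tau> (Suc N) l0 \<omega>" unfolding Fev_def using s0W s0min s0le t2(2)
      by (intro exI[of _ s0]) auto
    then show False using nF by contradiction
  qed
  then have "Tg n r (load l0 \<omega> (s0 + \<tau> + (t2 - s0)))" by (rule Tg_mono_valid[OF v])
  moreover have "s0 + \<tau> + (t2 - s0) = t2 + \<tau>" using s0le by simp
  ultimately have Tt: "Tg n r (load l0 \<omega> (t2 + \<tau>))" by simp
  obtain t3 where t3: "T3 c n l0 \<omega> = enat t3" "t3 \<le> t2 + \<tau>"
    using hit_from_enat[of t2 "t2 + \<tau>" "\<lambda>t. maxload n (load l0 \<omega> t) \<le> round (avg n l0) + 1 \<and>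
          minload n (load l0 \<omega> t) \<ge> round (avg n l0) - 1"] Tt a r t2(1) T_conv[OF n1]
    unfolding T3_def by auto
  show ?thesis using t2(1) t3 by blast
qed

lemma meas_T:
  shows "(\<lambda>\<omega>. T1 n l0 \<omega>) \<in> measurable (pair_space n) (count_space UNIV)"
    and "(\<lambda>\<omega>. T2 c n l0 \<omega>) \<in> measurable (pair_space n) (count_space UNIV)"
    and "(\<lambda>\<omega>. T3 c n l0 \<omega>) \<in> measurable (pair_space n) (count_space UNIV)"
proof -
  show m1: "(\<lambda>\<omega>. T1 n l0 \<omega>) \<in> measurable (pair_space n) (count_space UNIV)"
    unfolding T1_def by (rule meas_hit) (simp, rule pred_load)
  show m2: "(\<lambda>\<omega>. T2 c n l0 \<omega>) \<in> measurable (pair_space n) (count_space UNIV)"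
    unfolding T2_def by (rule meas_hit[OF m1]) (rule pred_load)
  show "(\<lambda>\<omega>. T3 c n l0 \<omega>) \<in> measurable (pair_space n) (count_space UNIV)"
    unfolding T3_def by (rule meas_hit[OF m2]) (rule pred_load)
qed

lemma pred_good:
  "Measurable.pred (pair_space n) (\<lambda>\<omega>. \<exists>t2 t3 :: nat. T2 c n l0 \<omega> = enat t2 \<and> T3 c n l0 \<omega> = enat t3 \<and>
          real t3 \<le> real t2 + X)"
proof -
  have c1: "Measurable.pred (pair_space n) (\<lambda>\<omega>. b)" for b :: bool by simp
  have e2: "Measurable.pred (pair_space n) (\<lambda>\<omega>. T2 c n l0 \<omega> = enat t)" for t
    by (rule measurable_compose[OF meas_T(2)]) simp
  have e3: "Measurable.pred (pair_space n) (\<lambda>\<omega>. T3 c n l0 \<omega> = enat t)" for t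
    by (rule measurable_compose[OF meas_T(3)]) simp
  show ?thesis
    by (intro pred_intros_countable(2) pred_intros_logic(3) e2 e3 c1)
qed



lemma num_bound:
  fixes c :: real and n :: nat
  assumes c2: "c \<ge> 1/2" and n2: "n \<ge> 2"
    and kap: "\<kappa> = 2*c*(4*c+4)" and q: "q = 1 / (\<kappa> * real n)"
    and X: "X = 2*\<kappa> * real n * ln (real n)" and tau: "\<tau> = nat \<lfloor>X\<rfloor>"
  shows "2*c*real n * (1 - q)^\<tau> \<le> 6*c / real n" and "0 \<le> q" "q \<le> 1" and "real \<tau> \<le> X"
proof -
  have c: "c > 0" using c2 by simp
  have npos: "real n \<ge> 2" using n2 by simp
  have K: "\<kappa> \<ge> 1" unfolding kap
  proof -
    have "1 * 1 \<le> (2*c)*(4*c+4)" using c2 by (intro mult_mono) auto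
    then show "1 \<le> 2*c*(4*c+4)" by simp
  qed
  have Kn: "\<kappa> * real n \<ge> 1"
  proof -
    have "1 * 1 \<le> \<kappa> * real n" using K npos by (intro mult_mono) auto
    then show ?thesis by simp
  qed
  have gen: "\<And>D::real. 1 \<le> D \<Longrightarrow> 0 \<le> 1/D \<and> 1/D \<le> 1" by auto
  show q0: "0 \<le> q" "q \<le> 1" using gen[OF Kn] unfolding q by auto
  have lnpos: "ln (real n) > 0" using npos by simp
  have X0: "X \<ge> 0" unfolding X using K npos lnpos by simp
  have fl: "real \<tau> = real_of_int \<lfloor>X\<rfloor>" unfolding tau using X0 by (simp add: of_nat_nat)
  have tauX: "real \<tau> \<ge> X - 1" "real \<tau> \<le> X"
    unfolding fl using of_int_floor_le[of X] real_of_int_floor_gt_diff_one[of X] by linarith+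
  show "real \<tau> \<le> X" by (rule tauX(2))
  have qX: "q * X = 2 * ln (real n)" unfolding q X using K npos by (simp add: field_simps)
  have "(1 - q)^\<tau> \<le> (exp (-q))^\<tau>"
    using q0 by (intro power_mono) (use exp_ge_add_one_self[of "-q"] in auto)
  also have "\<dots> = exp (- (q * real \<tau>))" by (simp add: exp_of_nat_mult[symmetric] mult.commute)
  also have "\<dots> \<le> exp (1 - 2 * ln (real n))"
  proof -
    have "q * real \<tau> \<ge> q * (X - 1)" using q0 tauX by (intro mult_left_mono) auto
    then have "q * real \<tau> \<ge> 2 * ln (real n) - 1" using qX q0 by (simp add: algebra_simps)
    then show ?thesis by simp
  qed
  also have "\<dots> = exp 1 / (real n)^2"
  proof -
    have "exp (2 * ln (real n)) = (real n)^2"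
      using npos by (simp add: exp_of_nat_mult[of 2, simplified] )
    then show ?thesis by (simp add: exp_diff)
  qed
  finally have b: "(1 - q)^\<tau> \<le> exp 1 / (real n)^2" .
  have "2*c*real n * (1 - q)^\<tau> \<le> 2*c*real n * (exp 1 / (real n)^2)"
    using b c npos by (intro mult_left_mono) auto
  also have "\<dots> = 2*c*exp 1 / real n" using npos by (simp add: power2_eq_square field_simps)
  also have "\<dots> \<le> 6*c / real n"
    using exp_le c npos by (intro divide_right_mono) auto
  finally show "2*c*real n * (1 - q)^\<tau> \<le> 6*c / real n" .
qed



lemma pred_valid: "Measurable.pred (pair_space n) (\<lambda>\<omega>. \<forall>i. \<omega> !! i \<in> node_pairs n)"
proof (intro pred_intros_countable(1))
  fix i
  have "(\<lambda>\<omega>. \<omega> !! i) \<in> measurable (pair_space n) (count_space UNIV)"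
    unfolding pair_space_def
    using measurable_snth[of i "PM n"] by (simp add: measurable_cong_sets[OF refl sets_measure_pmf_count_space])
  then show "Measurable.pred (pair_space n) (\<lambda>\<omega>. \<omega> !! i \<in> node_pairs n)"
    by (rule measurable_compose) simp
qed

lemma Exs_le:
  assumes W: "Wc c n a l" and r1: "a - 1/2 \<le> real_of_int r" and r2: "real_of_int r \<le> a + 1/2"
  shows "real_of_int (Exs n r l) \<le> 2*c*real n"
proof -
  have "real_of_int (Exs n r l) = (\<Sum>i<n. real_of_int (e r (l i)))" unfolding Exs_def by simp
  also have "\<dots> \<le> (\<Sum>i<n. 2*c)"
    by (rule sum_mono) (use W r1 r2 e_bound(1) in \<open>auto simp: Wc_def\<close>)
  finally show ?thesis by (simp add: algebra_simps)
qed

lemma main_bound: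
  fixes c :: real and n :: nat and l0 :: "nat \<Rightarrow> int"
  assumes "c \<ge> 10" and n2: "n \<ge> 2"
  shows "measure (pair_space n)
       {\<omega> \<in> space (pair_space n). \<exists>t2 t3 :: nat.
          T2 c n l0 \<omega> = enat t2 \<and> T3 c n l0 \<omega> = enat t3 \<and>
          real t3 \<le> real t2 + (2*(2*c*(4*c+4))) * real n * ln (real n)}
     \<ge> 1 - (6*c) / real n"
proof -
    have c2: "c \<ge> 1/2" using assms by simp
    define \<kappa> where "\<kappa> = 2*c*(4*c+4)"
    interpret P: prob_space "pair_space n" by (rule ps_prob)
    define s where "s = (\<Sum>i<n. l0 i)"
    define a where "a = avg n l0"
    define r where "r = round a"
    define q where "q = 1 / (\<kappa> * real n)"
    define X where "X = 2*\<kappa> * real n * ln (real n)"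
    define \<tau> where "\<tau> = nat \<lfloor>X\<rfloor>"
    define B where "B = 2*c*real n * (1 - q)^\<tau>"
    define GS where "GS = {\<omega> \<in> space (pair_space n). \<exists>t2 t3 :: nat.
          T2 c n l0 \<omega> = enat t2 \<and> T3 c n l0 \<omega> = enat t3 \<and> real t3 \<le> real t2 + 2*\<kappa> * real n * ln (real n)}"
    have npos: "real n > 0" using n2 by simp
    have sa: "real_of_int s = a * real n" unfolding s_def a_def avg_def using npos by simp
    have r1: "a - 1/2 \<le> real_of_int r" unfolding r_def by (rule of_int_round_ge)
    have r2: "real_of_int r \<le> a + 1/2" unfolding r_def by (rule of_int_round_le)
    note nb = num_bound[OF c2 n2 \<kappa>_def q_def X_def \<tau>_def]
    have q1: "1 - q \<ge> 0" using nb(3) by simp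
    have B0: "B \<ge> 0" unfolding B_def using c2 q1 by simp
    have hB: "Pr n l \<tau> (\<lambda>l. \<not> Tg n r l) \<le> B" if inv: "(\<Sum>i<n. l i) = s" and W: "Wc c n a l" for l
    proof -
      have q': "q = 1 / (2*c*(4*c+4) * real n)" unfolding q_def \<kappa>_def ..
      have "Pr n l \<tau> (\<lambda>l. \<not> Tg n r l) \<le> real_of_int (Exs n r l) * (1 - q)^\<tau>"
        using drift_prob[OF n2 c2 sa r1 r2 q'] inv W by blast
      also have "\<dots> \<le> 2*c*real n * (1 - q)^\<tau>"
        using Exs_le[OF W r1 r2] q1 by (intro mult_right_mono) auto
      finally show ?thesis unfolding B_def .
    qed
    have Fb: "measure (pair_space n) {\<omega> \<in> space (pair_space n). Fev c n a r \<tau> N l0 \<omega>} \<le> B" for N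
    proof -
      have "\<forall>l. (\<Sum>i<n. l i) = s \<longrightarrow> measure (pair_space n) {\<omega> \<in> space (pair_space n). Fev c n a r \<tau> N l \<omega>} \<le> B"
        by (rule Fev_bound[OF n2 B0]) (rule hB)
      then show ?thesis using s_def by simp
    qed
    define Z where "Z = real_of_int (Qs n l0) * real (card (node_pairs n))"
    have Z0: "Z \<ge> 0" unfolding Z_def using Qs_nonneg[of n l0] by simp
    have GSm: "GS \<in> sets (pair_space n)" unfolding GS_def using pred_good unfolding pred_def by blast
    have key: "measure (pair_space n) GS \<ge> 1 - B - Z / real N" if N: "N \<ge> 1" for N
    proof -
      define V where "V = {\<omega> \<in> space (pair_space n). \<not> (\<forall>i. \<omega> !! i \<in> node_pairs n)}"
      define NG where "NG = {\<omega> \<in> space (pair_space n). \<not> Gc c n a (load l0 \<omega> N)}"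
      define FF where "FF = {\<omega> \<in> space (pair_space n). Fev c n a r \<tau> (Suc N) l0 \<omega>}"
      have Vm: "V \<in> sets (pair_space n)" unfolding V_def
        using pred_intros_logic(2)[OF pred_valid] unfolding pred_def by blast
      have NGm: "NG \<in> sets (pair_space n)" unfolding NG_def
        using pred_load[where n=n and R="\<lambda>l. \<not> Gc c n a l" and l=l0 and t=N] unfolding pred_def by simp
      have FFm: "FF \<in> sets (pair_space n)" unfolding FF_def using pred_Fev unfolding pred_def by blast
      have sub: "space (pair_space n) - GS \<subseteq> V \<union> NG \<union> FF"
      proof
        fix \<omega> assume \<omega>: "\<omega> \<in> space (pair_space n) - GS"
        show "\<omega> \<in> V \<union> NG \<union> FF"
        proof (rule ccontr)
          assume "\<omega> \<notin> V \<union> NG \<union> FF"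
          then have v: "\<forall>i. \<omega> !! i \<in> node_pairs n" and G: "Gc c n a (load l0 \<omega> N)"
            and nF: "\<not> Fev c n a r \<tau> (Suc N) l0 \<omega>" using \<omega> unfolding V_def NG_def FF_def by auto
          obtain t2 t3 where tt: "T2 c n l0 \<omega> = enat t2" "T3 c n l0 \<omega> = enat t3" "t3 \<le> t2 + \<tau>"
            using good_incl[OF n2 a_def r_def v G nF] by blast
          have "real t3 \<le> real t2 + real \<tau>" using tt(3) by simp
          also have "\<dots> \<le> real t2 + 2*\<kappa> * real n * ln (real n)" using nb(4) unfolding X_def by simp
          finally have "\<omega> \<in> GS" unfolding GS_def using \<omega> tt by blast
          then show False using \<omega> by blast
        qed
      qed
      have "1 - measure (pair_space n) GS = measure (pair_space n) (space (pair_space n) - GS)"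
        using P.prob_compl[OF GSm] by simp
      also have "\<dots> \<le> measure (pair_space n) (V \<union> NG \<union> FF)"
        using sub Vm NGm FFm by (intro P.finite_measure_mono) auto
      also have "\<dots> \<le> measure (pair_space n) (V \<union> NG) + measure (pair_space n) FF"
        using Vm NGm FFm by (intro measure_subadditive) (auto simp: P.emeasure_eq_measure)
      also have "\<dots> \<le> measure (pair_space n) V + measure (pair_space n) NG + measure (pair_space n) FF"
        using measure_subadditive[OF Vm NGm] by (simp add: P.emeasure_eq_measure)
      also have "measure (pair_space n) V = 0" unfolding V_def by (rule valid_prob[OF n2])
      also have "measure (pair_space n) NG = Pr n l0 N (\<lambda>l. \<not> Gc c n a l)" unfolding NG_def Pr_def ..
      also have "\<dots> \<le> Z / real N" unfolding Z_def by (rule notG_tail[OF n2 c2 sa s_def[symmetric] N])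
      also have "measure (pair_space n) FF \<le> B" unfolding FF_def by (rule Fb)
      finally show ?thesis by simp
    qed
    have final: "measure (pair_space n) GS \<ge> 1 - B"
    proof (rule ccontr)
      assume "\<not> measure (pair_space n) GS \<ge> 1 - B"
      then have D: "1 - B - measure (pair_space n) GS > 0" by simp
      obtain N :: nat where N: "Z / (1 - B - measure (pair_space n) GS) < real N"
        using reals_Archimedean2 by blast
      define N' where "N' = max N 1"
      have N'1: "N' \<ge> 1" unfolding N'_def by simp
      have "Z / (1 - B - measure (pair_space n) GS) < real N'" using N unfolding N'_def by simp
      then have "Z < real N' * (1 - B - measure (pair_space n) GS)" using D by (simp add: divide_less_eq)
      then have "Z / real N' < 1 - B - measure (pair_space n) GS" using N'1 by (simp add: divide_less_eq mult.commute)
      then show False using key[OF N'1] by linarith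
    qed
    show ?thesis
      using final nb(1) unfolding GS_def B_def \<kappa>_def by linarith
qed

theorem lemma5:
  fixes c :: real
  assumes "c \<ge> 10"
  shows "\<exists>C K :: real. \<forall>n :: nat. \<forall>l0 :: nat \<Rightarrow> int. n \<ge> 2 \<longrightarrow>
     measure (pair_space n)
       {\<omega> \<in> space (pair_space n). \<exists>t2 t3 :: nat.
          T2 c n l0 \<omega> = enat t2 \<and> T3 c n l0 \<omega> = enat t3 \<and>
          real t3 \<le> real t2 + C * real n * ln (real n)}
     \<ge> 1 - K / real n"
  using main_bound[OF assms] by blast


end
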